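(* Let $f\in C^1([0,1])$ satisfy $f(0)=f(1)=0$, $f(u)>0$ for $u\in(0,1)$, $f'(0)>0$, $f(u)\leqslant f'(0)u$ for $u\in(0,1)$. For $a>0$ and $b<0$ let $k(x)=\frac{1}{a-b}$ for $x\in[b,a]$ and $k(x)=0$ otherwise, let $r=\frac{a+b}{a-b}\in(-1,1)$, and let $c_l^*,c_r^*$ be as in the context. If $f'(0)\geqslant1$, then $c_l^*<0<c_r^*$. If $f'(0)<1$, there exists a constant $r^*>0$ (depending only on $f'(0)$) such that: (i) if $r>r^*$, then $0<c_l^*<c_r^*$; (ii) if $r=r^*$, then $0=c_l^*<c_r^*$; (iii) if $-r^*<r<r^*$, then $c_l^*<0<c_r^*$; (iv) if $r=-r^*$, then $c_l^*<c_r^*=0$; (v) if $r<-r^*$, then $c_l^*<c_r^*<0$.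
   Context: $c_l^*=\sup_{\lambda<0}\{\lambda^{-1}[\int_{\mathbb R}k(x)e^{\lambda x}dx-1+f'(0)]\}$ and $c_r^*=\inf_{\lambda>0}\{\lambda^{-1}[\int_{\mathbb R}k(x)e^{\lambda x}dx-1+f'(0)]\}$ are the spreading speeds to the left and right of $u_t=\int_{\mathbb R}k(x-y)u(t,y)dy-u+f(u)$. *)

theory Defs
  imports "HOL-Analysis.Analysis"
begin

definition unif_kernel :: "real \<Rightarrow> real \<Rightarrow> real \<Rightarrow> real" where
  "unif_kernel a b x = (if b \<le> x \<and> x \<le> a then 1 / (a - b) else 0)"

text \<open>Left spreading speed: sup over lambda < 0 of
  lambda^-1 [ integral k(x) e^(lambda x) dx - 1 + f'(0) ], with s = f'(0).\<close>
definition c_left :: "(real \<Rightarrow> real) \<Rightarrow> real \<Rightarrow> real" where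
  "c_left k s = Sup {(integral UNIV (\<lambda>x. k x * exp (l * x)) - 1 + s) / l | l. l < 0}"

definition c_right :: "(real \<Rightarrow> real) \<Rightarrow> real \<Rightarrow> real" where
  "c_right k s = Inf {(integral UNIV (\<lambda>x. k x * exp (l * x)) - 1 + s) / l | l. l > 0}"

definition kpp_nonlin :: "(real \<Rightarrow> real) \<Rightarrow> (real \<Rightarrow> real) \<Rightarrow> bool" where
  "kpp_nonlin f f' \<longleftrightarrow>
     continuous_on {0..1} f' \<and>
     (\<forall>x\<in>{0..1}. (f has_real_derivative f' x) (at x within {0..1})) \<and>
     f 0 = 0 \<and> f 1 = 0 \<and> (\<forall>u\<in>{0<..<1}. f u > 0) \<and> f' 0 > 0 \<and>
     (\<forall>u\<in>{0<..<1}. f u \<le> f' 0 * u)"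

end

theory Submission
  imports Defs
begin

lemma kint:
  assumes "b < a" "l \<noteq> 0"
  shows "integral UNIV (\<lambda>x. unif_kernel a b x * exp (l * x)) = (exp (l*a) - exp (l*b)) / (l*(a-b))"
proof -
  have d: "((\<lambda>x. exp (l*x) / (l*(a-b))) has_vector_derivative (exp (l*x) / (a-b))) (at x within {b..a})" for x
    unfolding has_real_derivative_iff_has_vector_derivative[symmetric]
    using assms by (auto intro!: derivative_eq_intros)
  have "((\<lambda>x. exp (l*x) / (a-b)) has_integral (exp (l*a) / (l*(a-b)) - exp (l*b) / (l*(a-b)))) {b..a}"
    using fundamental_theorem_of_calculus[OF _ d] assms by simp
  then have "((\<lambda>x. if x \<in> {b..a} then exp (l*x) / (a-b) else 0) has_integral (exp (l*a) / (l*(a-b)) - exp (l*b) / (l*(a-b)))) UNIV"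
    by (simp only: has_integral_restrict_UNIV)
  moreover have "(\<lambda>x. unif_kernel a b x * exp (l * x)) = (\<lambda>x. if x \<in> {b..a} then exp (l*x) / (a-b) else 0)"
    by (auto simp: unif_kernel_def fun_eq_iff)
  ultimately show ?thesis by (simp add: integral_unique diff_divide_distrib)
qed

definition FF :: "real \<Rightarrow> real \<Rightarrow> real" where
  "FF r m = (exp (m*(1+r)) - exp (-(m*(1-r)))) / (2*m)"

definition gg :: "real \<Rightarrow> real \<Rightarrow> real \<Rightarrow> real" where
  "gg q r m = (FF r m - q) / m"

lemma FF_shift: "m > 0 \<Longrightarrow> FF r m = exp (m*(r-r')) * FF r' m"
proof -
  have "exp (m*(1+r)) = exp (m*(r-r')) * exp (m*(1+r'))" by (simp add: exp_add[symmetric] algebra_simps)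
  moreover have "exp (-(m*(1-r))) = exp (m*(r-r')) * exp (-(m*(1-r')))" by (simp add: exp_add[symmetric] algebra_simps)
  ultimately show "m > 0 \<Longrightarrow> ?thesis" by (simp add: FF_def right_diff_distrib)
qed

lemma FF_pos: "m > 0 \<Longrightarrow> FF r m > 0"
  unfolding FF_def by (auto intro!: divide_pos_pos simp: algebra_simps)

lemma sinh_ge: fixes m :: real assumes "m \<ge> 0" shows "exp m - exp (-m) \<ge> 2*m"
proof -
  define E :: real where "E = exp m"
  have E: "E \<ge> 1 + m + m^2/2" using exp_lower_Taylor_quadratic[OF assms] by (simp add: E_def)
  have Ep: "E > 0" by (simp add: E_def)
  have "E - m \<ge> 1 + m^2/2" using E by simp
  hence "(E - m)^2 \<ge> (1 + m^2/2)^2" using assms by (intro power_mono) auto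
  moreover have "(1 + m^2/2)^2 = 1 + m^2 + m^2*m^2/4" by (simp add: power2_eq_square algebra_simps)
  moreover have "m^2*m^2/4 \<ge> 0" by simp
  ultimately have "(E - m)^2 \<ge> 1 + m^2" by linarith
  moreover have "(E - m)^2 = E * (E - 2*m) + m^2" by (simp add: power2_eq_square algebra_simps)
  ultimately have "E * (E - 2*m) \<ge> 1" by linarith
  hence "E - 2*m \<ge> 1 / E" using Ep by (simp add: field_simps)
  thus ?thesis by (simp add: E_def exp_minus field_simps)
qed

lemma S_ge1: "m > 0 \<Longrightarrow> FF 0 m \<ge> 1"
  using sinh_ge[of m] by (simp add: FF_def)

lemma FF_eq: "m > 0 \<Longrightarrow> FF r m = exp (m*r) * FF 0 m"
  using FF_shift[of m r 0] by simp

lemma FF_ge_exp: "m > 0 \<Longrightarrow> FF r m \<ge> exp (m*r)"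
  using FF_eq[of m r] S_ge1[of m] by simp

lemma gg_ge: assumes "q \<le> 1" "m > 0" shows "gg q r m \<ge> r"
proof -
  have "FF r m \<ge> 1 + m*r" using FF_ge_exp[OF assms(2), of r] exp_ge_add_one_self[of "m*r"] by linarith
  hence "FF r m - q \<ge> m * r" using assms by linarith
  thus ?thesis using assms by (simp add: gg_def field_simps)
qed

lemma S_big: fixes m :: real assumes "m \<ge> 4" shows "FF 0 m - 1 \<ge> m/8"
proof -
  have "exp m \<ge> 1 + m + m^2/2" using exp_lower_Taylor_quadratic[of m] assms by simp
  moreover have "exp (-m) \<le> 1" using assms by simp
  ultimately have "exp m - exp (-m) \<ge> m + m^2/2" by linarith
  hence "FF 0 m \<ge> (m + m^2/2) / (2*m)" using assms unfolding FF_def by (intro divide_right_mono) auto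
  also have "(m + m^2/2) / (2*m) = 1/2 + m/4" using assms by (simp add: field_simps power2_eq_square)
  finally show ?thesis using assms by simp
qed

lemma gg_delta: assumes "r \<ge> 0" "q < 1" "m > 0" shows "gg q r m \<ge> r + min ((1-q)/4) (1/8)"
proof -
  have S1: "FF 0 m \<ge> 1" using S_ge1 assms by simp
  have "FF r m \<ge> (1 + m*r) * FF 0 m" using FF_eq[OF assms(3), of r] exp_ge_add_one_self[of "m*r"] S1
    by (simp add: mult_right_mono)
  also have "(1 + m*r) * FF 0 m \<ge> FF 0 m + m*r"
  proof -
    have "m*r*1 \<le> m*r*FF 0 m" using S1 assms by (intro mult_left_mono) auto
    thus ?thesis by (simp add: algebra_simps)
  qed
  finally have A: "FF r m \<ge> FF 0 m + m*r" .
  have B: "(FF 0 m - q) / m \<ge> min ((1-q)/4) (1/8)"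
  proof (cases "m \<le> 4")
    case True
    have "m * (1-q) \<le> 4 * (1-q)" using True assms by (intro mult_right_mono) auto
    also have "\<dots> \<le> 4 * (FF 0 m - q)" using S1 by simp
    finally have "(FF 0 m - q)/m \<ge> (1 - q)/4"
      using assms by (simp add: field_simps)
    thus ?thesis by linarith
  next
    case False
    have "FF 0 m - q \<ge> m/8" using S_big[of m] False assms by simp
    hence "(FF 0 m - q)/m \<ge> 1/8" using assms by (simp add: field_simps)
    thus ?thesis by linarith
  qed
  have "gg q r m = r + (FF r m - FF 0 m - m*r)/m + (FF 0 m - q)/m" using assms by (simp add: gg_def field_simps)
  moreover have "(FF r m - FF 0 m - m*r)/m \<ge> 0" using A assms by simp
  ultimately show ?thesis using B by linarith
qed

lemma gg_bigs: assumes "q \<le> 0" "r > -1" "r \<le> 1" "m > 0" shows "gg q r m \<ge> (1+r)^2/4"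
proof -
  have x: "m*(1+r) \<ge> 0" using assms by simp
  have "exp (m*(1+r)) \<ge> 1 + m*(1+r) + (m*(1+r))^2/2" using exp_lower_Taylor_quadratic[OF x] by simp
  moreover have "exp (-(m*(1-r))) \<le> 1" using assms by simp
  ultimately have "exp (m*(1+r)) - exp (-(m*(1-r))) \<ge> (m*(1+r))^2/2" using x by linarith
  hence "FF r m \<ge> ((m*(1+r))^2/2) / (2*m)" using assms unfolding FF_def by (intro divide_right_mono) auto
  also have "((m*(1+r))^2/2) / (2*m) = m * ((1+r)^2/4)" using assms by (simp add: field_simps power2_eq_square)
  finally have "FF r m - q \<ge> m * ((1+r)^2/4)" using assms by linarith
  thus ?thesis using assms by (simp add: gg_def field_simps)
qed

lemma FF_mono: assumes "r' \<le> r" "m > 0" shows "FF r' m \<le> FF r m"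
proof -
  have "exp (m*(r-r')) \<ge> 1" using assms by simp
  hence "1 * FF r' m \<le> exp (m*(r-r')) * FF r' m" using less_imp_le[OF FF_pos[OF assms(2), of r']] by (intro mult_right_mono) auto
  thus ?thesis using FF_shift[OF assms(2), of r r'] by simp
qed

lemma FF_rho: assumes "0 < q" "q < 1" "m > 0"
  shows "FF (- min (1/2) ((1-q)/12)) m \<ge> q"
proof (cases "m \<le> 12")
  case True
  define p where "p = min (1/2) ((1-q)/12)"
  have p: "p \<le> (1-q)/12" "p > 0" using assms by (auto simp: p_def)
  have "m * p \<le> 12 * ((1-q)/12)" using True p assms by (intro mult_mono) auto
  hence "exp (m*(-p)) \<ge> q" using exp_ge_add_one_self[of "m*(-p)"] by simp
  moreover have "FF 0 m \<ge> 1" using S_ge1 assms by simp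
  ultimately have "exp (m*(-p)) * FF 0 m \<ge> q * 1" using assms by (intro mult_mono) auto
  thus ?thesis using FF_eq[OF assms(3), of "-p"] by (simp add: p_def)
next
  case False
  have "exp (m/2) \<ge> 1 + m/2 + (m/2)^2/2" using exp_lower_Taylor_quadratic[of "m/2"] assms by simp
  moreover have "exp (-(m*(1-(-1/2)))) \<le> 1" using assms by simp
  moreover have "exp (m*(1+(-1/2))) = exp (m/2)" by simp
  ultimately have "exp (m*(1+(-1/2))) - exp (-(m*(1-(-1/2)))) \<ge> m/2 + (m/2)^2/2" by linarith
  hence "FF (-1/2) m \<ge> (m/2 + (m/2)^2/2) / (2*m)" using assms unfolding FF_def by (intro divide_right_mono) auto
  also have "(m/2 + (m/2)^2/2) / (2*m) = 1/4 + m/16" using assms by (simp add: field_simps power2_eq_square)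
  finally have "FF (-1/2) m \<ge> 1" using False by simp
  moreover have "FF (-1/2) m \<le> FF (- min (1/2) ((1-q)/12)) m" using assms by (intro FF_mono) auto
  ultimately show ?thesis using assms by simp
qed

lemma FF_r0: assumes "q > 0" shows "FF (-1+q/2) (1/q) < q"
proof -
  have "exp (-1/2::real) \<ge> 1 + (-1/2)" by (rule exp_ge_add_one_self)
  hence "exp (1/2::real) \<le> 2" by (simp add: exp_minus field_simps)
  moreover have "1/q*(1+(-1+q/2)) = 1/2" using assms by (simp add: field_simps)
  ultimately have "exp (1/q*(1+(-1+q/2))) \<le> 2" by simp
  moreover have "exp (-(1/q*(1-(-1+q/2)))) > 0" by simp
  ultimately have "exp (1/q*(1+(-1+q/2))) - exp (-(1/q*(1-(-1+q/2)))) < 2" by linarith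
  hence "FF (-1+q/2) (1/q) < 2 / (2*(1/q))" unfolding FF_def using assms by (intro divide_strict_right_mono) auto
  thus ?thesis using assms by simp
qed

lemma FF_K: assumes "q > 0" "m \<ge> 12/q" "q < 1" shows "FF (-1+q/2) m \<ge> q"
proof -
  have m: "m > 0" using assms by (smt (verit) divide_pos_pos)
  define x where "x = m*q/2"
  have x6: "x \<ge> 6" using assms by (simp add: x_def field_simps)
  have "exp x \<ge> 1 + x + x^2/2" using exp_lower_Taylor_quadratic[of x] x6 by simp
  moreover have "x^2/2 \<ge> 3*x" using x6 by (simp add: power2_eq_square)
  moreover have "exp (-(m*(1-(-1+q/2)))) \<le> 1" using assms m by simp
  moreover have "exp (m*(1+(-1+q/2))) = exp x" by (simp add: x_def)
  ultimately have "exp (m*(1+(-1+q/2))) - exp (-(m*(1-(-1+q/2)))) \<ge> 4*x" by linarith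
  hence "FF (-1+q/2) m \<ge> (4*x) / (2*m)" using m unfolding FF_def by (intro divide_right_mono) auto
  also have "(4*x)/(2*m) = q" using m by (simp add: x_def)
  finally show ?thesis .
qed

definition Cr :: "real \<Rightarrow> real \<Rightarrow> real \<Rightarrow> real" where
  "Cr h q r = Inf ((\<lambda>m. h * gg q r m) ` {0<..})"

lemma Cr_bdd: assumes "h > 0" "q \<le> 1" shows "bdd_below ((\<lambda>m. h * gg q r m) ` {0<..})"
  unfolding bdd_below_def using gg_ge[OF assms(2)] assms
  by (intro exI[of _ "h*r"]) (auto intro: mult_left_mono)

lemma Cr_ge: assumes "\<And>m. m > 0 \<Longrightarrow> c \<le> h * gg q r m" shows "c \<le> Cr h q r"
  unfolding Cr_def by (rule cInf_greatest) (auto intro: assms)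

lemma Cr_ge_r: assumes "h > 0" "q \<le> 1" shows "h*r \<le> Cr h q r"
  using gg_ge[OF assms(2)] assms by (intro Cr_ge) (auto intro: mult_left_mono)

lemma Cr_lt: assumes "h > 0" "q \<le> 1" "m > 0" "h * gg q r m < c" shows "Cr h q r < c"
proof -
  have "Cr h q r \<le> h * gg q r m" unfolding Cr_def using assms Cr_bdd[OF assms(1,2)]
    by (intro cInf_lower) auto
  thus ?thesis using assms by simp
qed

definition PP :: "real \<Rightarrow> real \<Rightarrow> bool" where
  "PP q r \<longleftrightarrow> (\<forall>m>0. q \<le> FF r m)"

definition tt :: "real \<Rightarrow> real" where
  "tt q = Inf {r. PP q r}"

lemma PP_mono: "PP q r' \<Longrightarrow> r' \<le> r \<Longrightarrow> PP q r"
  unfolding PP_def using FF_mono by (meson order_trans)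

lemma tt_props: assumes "0 < q" "q < 1"
  shows "tt q < 0" "PP q (tt q)" "tt q > -1 + q/2" "\<And>r. r > tt q \<Longrightarrow> \<exists>r'. PP q r' \<and> r' < r"
    "\<And>r. r < tt q \<Longrightarrow> \<not> PP q r"
proof -
  define p where "p = min (1/2) ((1-q)/12)"
  have p0: "p > 0" using assms by (simp add: p_def)
  have Pp: "PP q (-p)" using FF_rho assms unfolding PP_def p_def by blast
  have lb: "r > -1+q/2" if "PP q r" for r
  proof (rule ccontr)
    assume "\<not> ?thesis"
    hence "PP q (-1+q/2)" using PP_mono that by simp
    hence "q \<le> FF (-1+q/2) (1/q)" unfolding PP_def using assms by simp
    thus False using FF_r0 assms by (smt (verit))
  qed
  have bdd: "bdd_below {r. PP q r}" unfolding bdd_below_def using lb by (intro exI[of _ "-1+q/2"]) (auto intro: less_imp_le)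
  have ne: "{r. PP q r} \<noteq> {}" using Pp by auto
  show "tt q < 0" using cInf_lower[of "-p" "{r. PP q r}"] Pp bdd p0 unfolding tt_def by simp
  show ex: "\<exists>r'. PP q r' \<and> r' < r" if "r > tt q" for r
    using cInf_lessD[OF ne, of r] that unfolding tt_def by auto
  show "\<not> PP q r" if "r < tt q" for r
    using cInf_lower[of r "{r. PP q r}"] bdd that unfolding tt_def by auto
  show Pt: "PP q (tt q)" unfolding PP_def
  proof (intro allI impI, rule ccontr)
    fix m :: real assume m: "m > 0" and "\<not> q \<le> FF (tt q) m"
    hence F: "FF (tt q) m < q" by simp
    have Fp: "FF (tt q) m > 0" using FF_pos m by simp
    define d where "d = ln (q / FF (tt q) m) / (2*m)"
    have l: "ln (q / FF (tt q) m) > 0" using F Fp by simp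
    hence d0: "d > 0" using m by (simp add: d_def)
    have "m*d = ln (q / FF (tt q) m) / 2" using m by (simp add: d_def)
    hence "exp (m*d) < exp (ln (q / FF (tt q) m))" using l by simp
    also have "\<dots> = q / FF (tt q) m" using F Fp assms by simp
    finally have "exp (m*d) * FF (tt q) m < q" using Fp by (simp add: field_simps)
    moreover obtain r' where "PP q r'" "r' < tt q + d" using ex[of "tt q + d"] d0 by auto
    hence "PP q (tt q + d)" using PP_mono by auto
    hence "q \<le> FF (tt q + d) m" using m unfolding PP_def by auto
    moreover have "FF (tt q + d) m = exp (m*d) * FF (tt q) m" using FF_shift[OF m, of "tt q + d" "tt q"] by simp
    ultimately show False by simp
  qed
  show "tt q > -1 + q/2" using lb[OF Pt] .
qed

lemma Cr_pos: assumes "0 < q" "q < 1" "h > 0" "r > tt q" shows "Cr h q r > 0"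
proof -
  obtain r' where r': "PP q r'" "r' < r" using tt_props(4)[OF assms(1,2,4)] by auto
  have "h * ((r - r') * q) \<le> h * gg q r m" if m: "m > 0" for m
  proof -
    have F': "FF r' m \<ge> q" using r' m unfolding PP_def by auto
    have "FF r m = exp (m*(r-r')) * FF r' m" using FF_shift[OF m] by simp
    also have "\<dots> \<ge> (1 + m*(r-r')) * FF r' m" using F' assms exp_ge_add_one_self[of "m*(r-r')"]
      by (intro mult_right_mono) auto
    finally have "FF r m - q \<ge> (FF r' m - q) + m*(r-r') * FF r' m" by (simp add: algebra_simps)
    moreover have "m*(r-r') * FF r' m \<ge> m*(r-r') * q" using F' m r' by (intro mult_left_mono) auto
    ultimately have "FF r m - q \<ge> m * ((r-r')*q)" using F' by (simp add: algebra_simps)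
    hence "gg q r m \<ge> (r-r')*q" using m by (simp add: gg_def field_simps)
    thus ?thesis using assms by (intro mult_left_mono) auto
  qed
  hence "h * ((r - r') * q) \<le> Cr h q r" by (intro Cr_ge)
  moreover have "h * ((r - r') * q) > 0" using assms r' by simp
  ultimately show ?thesis by simp
qed

lemma Cr_neg: assumes "0 < q" "q < 1" "h > 0" "r < tt q" shows "Cr h q r < 0"
proof -
  obtain m where m: "m > 0" "FF r m < q" using tt_props(5)[OF assms(1,2,4)] unfolding PP_def by auto
  hence "h * gg q r m < 0" using assms by (simp add: gg_def mult_pos_neg divide_neg_pos)
  thus ?thesis using Cr_lt[of h q m r 0] assms m by simp
qed

lemma Cr_zero: assumes "0 < q" "q < 1" "h > 0" shows "Cr h q (tt q) = 0"
proof -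
  let ?t = "tt q"
  have "0 \<le> Cr h q ?t"
  proof (intro Cr_ge)
    fix m :: real assume "m > 0"
    hence "gg q ?t m \<ge> 0" using tt_props(2)[OF assms(1,2)] unfolding PP_def gg_def by auto
    thus "0 \<le> h * gg q ?t m" using assms by simp
  qed
  moreover have "\<not> Cr h q ?t > 0"
  proof
    assume c: "Cr h q ?t > 0"
    define e where "e = Cr h q ?t / h"
    have e: "e > 0" using c assms by (simp add: e_def)
    define d where "d = min (q/12) (min (e/(3*q)) ((?t - (-1+q/2))/2))"
    have d0: "d > 0" using assms e tt_props(3)[OF assms(1,2)] by (simp add: d_def)
    have dle: "d \<le> q/12" "d \<le> e/(3*q)" "d \<le> (?t - (-1+q/2))/2" unfolding d_def by linarith+
    have "\<not> PP q (?t - d)" using tt_props(5)[OF assms(1,2)] d0 by simp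
    then obtain m where m: "m > 0" "FF (?t - d) m < q" unfolding PP_def by auto
    have mK: "m < 12/q"
    proof (rule ccontr)
      assume "\<not> m < 12/q"
      hence "FF (-1+q/2) m \<ge> q" using FF_K assms by simp
      moreover have "FF (-1+q/2) m \<le> FF (?t - d) m" using dle(3) m d0 by (intro FF_mono) auto
      ultimately show False using m by simp
    qed
    have md: "m*d \<le> 1"
    proof -
      have "m*d \<le> (12/q)*(q/12)" using mK dle(1) m d0 by (intro mult_mono) auto
      thus ?thesis using assms by simp
    qed
    have "FF ?t m = exp (m*d) * FF (?t - d) m" using FF_shift[OF m(1), of ?t "?t - d"] by simp
    also have "\<dots> < exp (m*d) * q" using m by simp
    finally have "FF ?t m - q < q * (exp (m*d) - 1)" by (simp add: algebra_simps)
    also have "exp (m*d) - 1 \<le> m*d*exp (m*d)"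
    proof -
      have "exp (-(m*d)) \<ge> 1 - m*d" using exp_ge_add_one_self[of "-(m*d)"] by simp
      hence "exp (m*d) * exp (-(m*d)) \<ge> exp (m*d) * (1 - m*d)" by (intro mult_left_mono) auto
      thus ?thesis by (simp add: exp_minus algebra_simps)
    qed
    hence "q * (exp (m*d) - 1) \<le> q * (m*d*exp (m*d))" using assms by (intro mult_left_mono) auto
    also have "exp (m*d) \<le> 3" using md exp_le by (smt (verit) exp_mono)
    hence "q * (m*d*exp (m*d)) \<le> q * (m*d*3)" using assms m d0 by (intro mult_left_mono) auto
    finally have "FF ?t m - q < m * (3*q*d)" by (simp add: algebra_simps)
    hence "gg q ?t m < 3*q*d" using m by (simp add: gg_def field_simps)
    also have "3*q*d \<le> e" using dle(2) assms by (simp add: field_simps)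
    finally have "h * gg q ?t m < h * e" using assms by simp
    also have "h*e = Cr h q ?t" using assms by (simp add: e_def)
    finally have "Cr h q ?t < Cr h q ?t" using Cr_lt[of h q m ?t "Cr h q ?t"] assms m by linarith
    thus False by simp
  qed
  ultimately show ?thesis by simp
qed

lemma alg: fixes X h l s :: real assumes "h \<noteq> 0" "l \<noteq> 0"
  shows "(X - 1 + s) / l = h * ((X - (1-s)) / (l*h))"
  using assms by (simp add: field_simps)

lemma alg2: fixes X h l s :: real assumes "h \<noteq> 0" "l \<noteq> 0"
  shows "(X - 1 + s) / (-l) = - (h * ((X - (1-s)) / (l*h)))"
  using assms by (simp add: field_simps)

lemma elem_pos:
  assumes "a > 0" "b < 0" "l > 0"
  shows "(integral UNIV (\<lambda>x. unif_kernel a b x * exp (l * x)) - 1 + s) / l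
         = ((a-b)/2) * gg (1-s) ((a+b)/(a-b)) (l*((a-b)/2))"
proof -
  have ab: "a - b > 0" using assms by simp
  have e1: "l*((a-b)/2)*(1+(a+b)/(a-b)) = l*a" using ab by (simp add: field_simps)
  have e2: "l*((a-b)/2)*(1-(a+b)/(a-b)) = -(l*b)" using ab by (simp add: field_simps)
  have I: "integral UNIV (\<lambda>x. unif_kernel a b x * exp (l * x)) = (exp (l*a) - exp (l*b)) / (l*(a-b))"
    using kint[of b a l] assms by simp
  have F: "FF ((a+b)/(a-b)) (l*((a-b)/2)) = (exp (l*a) - exp (l*b)) / (l*(a-b))"
    unfolding FF_def e1 e2 by simp
  have h: "(a-b)/2 \<noteq> 0" "l \<noteq> 0" using ab assms by auto
  show ?thesis unfolding gg_def F I using alg[OF h] by simp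
qed

lemma elem_neg:
  assumes "a > 0" "b < 0" "n > 0"
  shows "(integral UNIV (\<lambda>x. unif_kernel a b x * exp ((-n) * x)) - 1 + s) / (-n)
         = - (((a-b)/2) * gg (1-s) (-((a+b)/(a-b))) (n*((a-b)/2)))"
proof -
  have ab: "a - b > 0" using assms by simp
  have e1: "n*((a-b)/2)*(1+-((a+b)/(a-b))) = -(n*b)" using ab by (simp add: field_simps)
  have e2: "n*((a-b)/2)*(1-(-((a+b)/(a-b)))) = n*a" using ab by (simp add: field_simps)
  have I: "integral UNIV (\<lambda>x. unif_kernel a b x * exp ((-n) * x)) = (exp (-(n*a)) - exp (-(n*b))) / ((-n)*(a-b))"
    using kint[of b a "-n"] assms by simp
  have F: "FF (-((a+b)/(a-b))) (n*((a-b)/2)) = (exp (-(n*b)) - exp (-(n*a))) / (n*(a-b))"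
    unfolding FF_def e1 e2 by simp
  have I': "(exp (-(n*a)) - exp (-(n*b))) / ((-n)*(a-b)) = (exp (-(n*b)) - exp (-(n*a))) / (n*(a-b))"
    by (simp only: mult_minus_left divide_minus_right minus_divide_left minus_diff_eq)
  have h: "(a-b)/2 \<noteq> 0" "n \<noteq> 0" using ab assms by auto
  show ?thesis unfolding gg_def F I I' using alg2[OF h] by simp
qed

lemma bridge_r:
  assumes "a > 0" "b < 0"
  shows "c_right (unif_kernel a b) s = Cr ((a-b)/2) (1-s) ((a+b)/(a-b))"
proof -
  let ?h = "(a-b)/2" and ?r = "(a+b)/(a-b)"
  have h: "?h > 0" using assms by simp
  have "{(integral UNIV (\<lambda>x. unif_kernel a b x * exp (l * x)) - 1 + s) / l | l. l > 0}
        = (\<lambda>m. ?h * gg (1-s) ?r m) ` {0<..}"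
  proof (intro equalityI subsetI)
    fix y assume "y \<in> {(integral UNIV (\<lambda>x. unif_kernel a b x * exp (l * x)) - 1 + s) / l | l. l > 0}"
    then obtain l where l: "l > 0" "y = (integral UNIV (\<lambda>x. unif_kernel a b x * exp (l * x)) - 1 + s) / l" by auto
    have yy: "y = ?h * gg (1-s) ?r (l*?h)" using elem_pos[OF assms l(1), of s] l(2) by simp
    have "l*?h \<in> {0<..}" using h l by simp
    thus "y \<in> (\<lambda>m. ?h * gg (1-s) ?r m) ` {0<..}" using yy by (rule rev_image_eqI)
  next
    fix y assume "y \<in> (\<lambda>m. ?h * gg (1-s) ?r m) ` {0<..}"
    then obtain m where m: "m > 0" "y = ?h * gg (1-s) ?r m" by auto
    have pos: "m/?h > 0" using m h by simp
    have eq: "(m/?h)*?h = m" using h by simp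
    have "(integral UNIV (\<lambda>x. unif_kernel a b x * exp ((m/?h) * x)) - 1 + s) / (m/?h) = ?h * gg (1-s) ?r m"
      using elem_pos[OF assms \<open>m/?h > 0\<close>, of s] unfolding eq .
    hence "y = (integral UNIV (\<lambda>x. unif_kernel a b x * exp ((m/?h) * x)) - 1 + s) / (m/?h)"
      using m(2) by metis
    with pos show "y \<in> {(integral UNIV (\<lambda>x. unif_kernel a b x * exp (l * x)) - 1 + s) / l | l. l > 0}"
      by blast
  qed
  thus ?thesis unfolding c_right_def Cr_def by simp
qed

lemma bridge_l:
  assumes "a > 0" "b < 0"
  shows "c_left (unif_kernel a b) s = - Cr ((a-b)/2) (1-s) (-((a+b)/(a-b)))"
proof -
  let ?h = "(a-b)/2" and ?r = "-((a+b)/(a-b))"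
  have h: "?h > 0" using assms by simp
  have "{(integral UNIV (\<lambda>x. unif_kernel a b x * exp (l * x)) - 1 + s) / l | l. l < 0}
        = uminus ` ((\<lambda>m. ?h * gg (1-s) ?r m) ` {0<..})"
  proof (intro equalityI subsetI)
    fix y assume "y \<in> {(integral UNIV (\<lambda>x. unif_kernel a b x * exp (l * x)) - 1 + s) / l | l. l < 0}"
    then obtain l where l: "l < 0" "y = (integral UNIV (\<lambda>x. unif_kernel a b x * exp (l * x)) - 1 + s) / l" by auto
    have "-l > 0" using l by simp
    from elem_neg[OF assms this, of s] l have yy: "y = - (?h * gg (1-s) ?r ((-l)*?h))" by simp
    have "(-l)*?h \<in> {0<..}" using h l by (simp add: mult_neg_pos)
    hence "?h * gg (1-s) ?r ((-l)*?h) \<in> (\<lambda>m. ?h * gg (1-s) ?r m) ` {0<..}" by (rule imageI)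
    thus "y \<in> uminus ` ((\<lambda>m. ?h * gg (1-s) ?r m) ` {0<..})" using yy by (rule rev_image_eqI)
  next
    fix y assume "y \<in> uminus ` ((\<lambda>m. ?h * gg (1-s) ?r m) ` {0<..})"
    then obtain m where m: "m > 0" "y = - (?h * gg (1-s) ?r m)" by auto
    have pos: "m/?h > 0" using m h by simp
    have eq: "(m/?h)*?h = m" using h by simp
    have "(integral UNIV (\<lambda>x. unif_kernel a b x * exp ((-(m/?h)) * x)) - 1 + s) / (-(m/?h)) = - (?h * gg (1-s) ?r m)"
      using elem_neg[OF assms \<open>m/?h > 0\<close>, of s] unfolding eq .
    hence "y = (integral UNIV (\<lambda>x. unif_kernel a b x * exp ((-(m/?h)) * x)) - 1 + s) / (-(m/?h))"
      using m(2) by metis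
    with pos show "y \<in> {(integral UNIV (\<lambda>x. unif_kernel a b x * exp (l * x)) - 1 + s) / l | l. l < 0}"
      by (intro CollectI exI[of _ "-(m/?h)"]) auto
  qed
  thus ?thesis unfolding c_left_def Cr_def Inf_real_def by simp
qed

lemma Cr_delta: assumes "h > 0" "q < 1" "r \<ge> 0" shows "h*(r + min ((1-q)/4) (1/8)) \<le> Cr h q r"
  using gg_delta[OF assms(3,2)] assms by (intro Cr_ge) (auto intro: mult_left_mono)

lemma cl_lt_cr: assumes "h > 0" "q < 1" shows "- Cr h q (-r) < Cr h q r"
proof -
  have d: "h * min ((1-q)/4) (1/8) > 0" using assms by simp
  show ?thesis
  proof (cases "r \<ge> 0")
    case True
    have "h*(-r) \<le> Cr h q (-r)" using Cr_ge_r[of h q "-r"] assms by simp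
    moreover have "h*(r + min ((1-q)/4) (1/8)) \<le> Cr h q r" using Cr_delta assms True by simp
    ultimately show ?thesis using d by (simp add: algebra_simps)
  next
    case False
    have "h*r \<le> Cr h q r" using Cr_ge_r assms by simp
    moreover have "h*(-r + min ((1-q)/4) (1/8)) \<le> Cr h q (-r)" using Cr_delta[of h q "-r"] assms False by simp
    ultimately show ?thesis using d by (simp add: algebra_simps)
  qed
qed

lemma Cr_bigs: assumes "h > 0" "q \<le> 0" "r > -1" "r \<le> 1" shows "Cr h q r > 0"
proof -
  have "h*((1+r)^2/4) \<le> Cr h q r" using gg_bigs[OF assms(2,3,4)] assms by (intro Cr_ge) (auto intro: mult_left_mono)
  moreover have "h*((1+r)^2/4) > 0" using assms by simp
  ultimately show ?thesis by simp
qed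

theorem corollary5p4:
  shows "(\<forall>f f' a b. kpp_nonlin f f' \<and> a > 0 \<and> b < 0 \<and> f' 0 \<ge> 1 \<longrightarrow>
            c_left (unif_kernel a b) (f' 0) < 0 \<and> 0 < c_right (unif_kernel a b) (f' 0))
       \<and> (\<exists>R :: real \<Rightarrow> real. \<forall>f f' a b.
            kpp_nonlin f f' \<and> a > 0 \<and> b < 0 \<and> f' 0 < 1 \<longrightarrow>
            (let r = (a + b) / (a - b); rs = R (f' 0);
                 cl = c_left (unif_kernel a b) (f' 0); cr = c_right (unif_kernel a b) (f' 0) in
             rs > 0 \<and>
             (r > rs \<longrightarrow> 0 < cl \<and> cl < cr) \<and>
             (r = rs \<longrightarrow> 0 = cl \<and> cl < cr) \<and>
             (- rs < r \<and> r < rs \<longrightarrow> cl < 0 \<and> 0 < cr) \<and>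
             (r = - rs \<longrightarrow> cl < cr \<and> cr = 0) \<and>
             (r < - rs \<longrightarrow> cl < cr \<and> cr < 0)))"
proof (rule conjI, intro allI impI)
  fix f f' :: "real \<Rightarrow> real" and a b :: real
  assume A: "kpp_nonlin f f' \<and> a > 0 \<and> b < 0 \<and> f' 0 \<ge> 1"
  let ?s = "f' 0" let ?h = "(a-b)/2" let ?r = "(a+b)/(a-b)"
  have h: "?h > 0" using A by simp
  have r: "?r > -1" "?r < 1" using A by (simp_all add: field_simps)
  have "Cr ?h (1-?s) ?r > 0" using Cr_bigs[OF h, of "1-?s" ?r] A r by simp
  moreover have "Cr ?h (1-?s) (-?r) > 0" using Cr_bigs[OF h, of "1-?s" "-?r"] A r by simp
  ultimately show "c_left (unif_kernel a b) (f' 0) < 0 \<and> 0 < c_right (unif_kernel a b) (f' 0)"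
    using bridge_l[of a b ?s] bridge_r[of a b ?s] A by simp
next
  show "\<exists>R :: real \<Rightarrow> real. \<forall>f f' a b.
            kpp_nonlin f f' \<and> a > 0 \<and> b < 0 \<and> f' 0 < 1 \<longrightarrow>
            (let r = (a + b) / (a - b); rs = R (f' 0);
                 cl = c_left (unif_kernel a b) (f' 0); cr = c_right (unif_kernel a b) (f' 0) in
             rs > 0 \<and>
             (r > rs \<longrightarrow> 0 < cl \<and> cl < cr) \<and>
             (r = rs \<longrightarrow> 0 = cl \<and> cl < cr) \<and>
             (- rs < r \<and> r < rs \<longrightarrow> cl < 0 \<and> 0 < cr) \<and>
             (r = - rs \<longrightarrow> cl < cr \<and> cr = 0) \<and>
             (r < - rs \<longrightarrow> cl < cr \<and> cr < 0))"
  proof (intro exI[of _ "\<lambda>s. - tt (1-s)"] allI impI)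
    fix f f' :: "real \<Rightarrow> real" and a b :: real
    assume A: "kpp_nonlin f f' \<and> a > 0 \<and> b < 0 \<and> f' 0 < 1"
    let ?s = "f' 0" let ?h = "(a-b)/2" let ?r = "(a+b)/(a-b)"
    define q where "q = 1 - ?s"
    define t where "t = tt q"
    have h: "?h > 0" using A by simp
    have q: "0 < q" "q < 1" using A unfolding q_def kpp_nonlin_def by auto
    have t0: "t < 0" using tt_props(1)[OF q] by (simp add: t_def)
    have cr: "c_right (unif_kernel a b) ?s = Cr ?h q ?r" using bridge_r A by (simp add: q_def)
    have cl: "c_left (unif_kernel a b) ?s = - Cr ?h q (-?r)" using bridge_l A by (simp add: q_def)
    have pos: "\<And>r. r > t \<Longrightarrow> Cr ?h q r > 0" using Cr_pos[OF q h] by (simp add: t_def)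
    have neg: "\<And>r. r < t \<Longrightarrow> Cr ?h q r < 0" using Cr_neg[OF q h] by (simp add: t_def)
    have zer: "Cr ?h q t = 0" using Cr_zero[OF q h] by (simp add: t_def)
    have lt: "- Cr ?h q (-?r) < Cr ?h q ?r" using cl_lt_cr[OF h q(2)] .
    show "let r = ?r; rs = (\<lambda>s. - tt (1-s)) ?s;
                 cl = c_left (unif_kernel a b) ?s; cr = c_right (unif_kernel a b) ?s in
             rs > 0 \<and>
             (r > rs \<longrightarrow> 0 < cl \<and> cl < cr) \<and>
             (r = rs \<longrightarrow> 0 = cl \<and> cl < cr) \<and>
             (- rs < r \<and> r < rs \<longrightarrow> cl < 0 \<and> 0 < cr) \<and>
             (r = - rs \<longrightarrow> cl < cr \<and> cr = 0) \<and>
             (r < - rs \<longrightarrow> cl < cr \<and> cr < 0)"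
      unfolding Let_def cr cl q_def[symmetric] t_def[symmetric]
    proof (intro conjI impI)
      show "0 < - t" using t0 by simp
      show "0 < - Cr ?h q (-?r)" if "?r > -t" using neg[of "-?r"] that by simp
      show "- Cr ?h q (-?r) < Cr ?h q ?r" using lt .
      show "0 = - Cr ?h q (-?r)" if "?r = -t" using zer that by simp
      show "- Cr ?h q (-?r) < Cr ?h q ?r" using lt .
      show "- Cr ?h q (-?r) < 0" if "- (- t) < ?r \<and> ?r < - t" using pos[of "-?r"] that by simp
      show "0 < Cr ?h q ?r" if "- (- t) < ?r \<and> ?r < - t" using pos[of "?r"] that by simp
      show "- Cr ?h q (-?r) < Cr ?h q ?r" using lt .
      show "Cr ?h q ?r = 0" if "?r = - (- t)" using zer that by simp
      show "- Cr ?h q (-?r) < Cr ?h q ?r" using lt .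
      show "Cr ?h q ?r < 0" if "?r < - (- t)" using neg that by simp
    qed
  qed
qed

end
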